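(* Let $n'$ be a positive even integer and $q\ge 4$ be even. There exists an ordering of all words of $\mathbb{Z}_q^{n'}$ in which consecutive words have Hamming distance $1$, beginning with $(0,0,\ldots,0)$ and ending with $(1,1,\ldots,1)$.
   Context: The Hamming distance between two words is the number of coordinates in which they differ. *)

theory Defs
  imports Main
begin

definition words :: "nat \<Rightarrow> nat \<Rightarrow> nat list set" where
  "words q n = {w. length w = n \<and> (\<forall>x\<in>set w. x < q)}"

definition hamming :: "'a list \<Rightarrow> 'a list \<Rightarrow> nat" where
  "hamming u v = card {i. i < length u \<and> i < length v \<and> u ! i \<noteq> v ! i}"

end

theory Submission
  imports Defs
begin

definition gp :: "nat list list \<Rightarrow> nat list \<Rightarrow> nat list \<Rightarrow> bool" where
  "gp ws a b \<longleftrightarrow> ws \<noteq> [] \<and> distinct ws \<and> successively (\<lambda>u v. hamming u v = 1) ws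
     \<and> hd ws = a \<and> last ws = b"

lemma hamming_cons_same: "hamming (x#u) (x#v) = hamming u v"
proof -
  have "{i. i < length (x#u) \<and> i < length (x#v) \<and> (x#u) ! i \<noteq> (x#v) ! i}
        = Suc ` {i. i < length u \<and> i < length v \<and> u ! i \<noteq> v ! i}"
    apply (rule set_eqI) subgoal for i by (cases i) auto done
  then show ?thesis unfolding hamming_def by (simp add: card_image)
qed

lemma hamming_cons_diff: "x \<noteq> y \<Longrightarrow> hamming (x#u) (y#u) = 1"
proof -
  assume "x \<noteq> y"
  have "{i. i < length (x#u) \<and> i < length (y#u) \<and> (x#u) ! i \<noteq> (y#u) ! i} = {0}"
    apply (rule set_eqI) subgoal for i using \<open>x \<noteq> y\<close> by (cases i) auto done
  then show ?thesis unfolding hamming_def by simp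
qed

lemma gp_map: "gp ws a b \<Longrightarrow> gp (map ((#) x) ws) (x#a) (x#b)"
  unfolding gp_def by (auto simp: successively_map hamming_cons_same distinct_map hd_map last_map)

lemma gp_append:
  assumes "gp xs a b" "gp ys c d" "set xs \<inter> set ys = {}" "hamming b c = 1"
  shows "gp (xs @ ys) a d"
  using assms unfolding gp_def by (auto simp: successively_append_iff)

lemma words_Suc: "words q (Suc n) = (\<lambda>(x,w). x#w) ` ({0..<q} \<times> words q n)"
  unfolding words_def by (auto simp: length_Suc_conv image_iff)

lemma layers:
  assumes d: "distinct vs"
    and P: "\<forall>k<length vs. gp (P k) (S k) (S (Suc k)) \<and> set (P k) = W"
  shows "0 < m \<Longrightarrow> m \<le> length vs \<Longrightarrow>
    gp (concat (map (\<lambda>k. map ((#) (vs!k)) (P k)) [0..<m])) (vs!0 # S 0) (vs!(m-1) # S m)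
    \<and> set (concat (map (\<lambda>k. map ((#) (vs!k)) (P k)) [0..<m])) = (\<lambda>(x,w). x#w) ` (set (take m vs) \<times> W)"
proof (induction m)
  case 0
  then show ?case by simp
next
  case (Suc m)
  show ?case
  proof (cases "m = 0")
    case True
    have "0 < length vs" using Suc.prems(2) by linarith
    then have "gp (P 0) (S 0) (S 1)" "set (P 0) = W" "take 1 vs = [vs!0]" using P by (auto simp: take_Suc_conv_app_nth)
    then show ?thesis using True Suc.prems
      by (auto simp: gp_map image_iff)
  next
    case False
    have IH: "gp (concat (map (\<lambda>k. map ((#) (vs!k)) (P k)) [0..<m])) (vs!0 # S 0) (vs!(m-1) # S m)"
      "set (concat (map (\<lambda>k. map ((#) (vs!k)) (P k)) [0..<m])) = (\<lambda>(x,w). x#w) ` (set (take m vs) \<times> W)"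
      using Suc False by auto
    have Pm: "gp (P m) (S m) (S (Suc m))" "set (P m) = W" using P Suc.prems by auto
    have nm: "vs!m \<notin> set (take m vs)" using d Suc.prems
      by (auto simp: in_set_conv_nth nth_eq_iff_index_eq)
    have neq: "vs!(m-1) \<noteq> vs!m" using d Suc.prems False
      by (simp add: nth_eq_iff_index_eq)
    have g: "gp (concat (map (\<lambda>k. map ((#) (vs!k)) (P k)) [0..<m]) @ map ((#) (vs!m)) (P m))
        (vs!0 # S 0) (vs!m # S (Suc m))"
      apply (rule gp_append[OF IH(1) gp_map[OF Pm(1)]])
      using nm IH(2) apply (auto simp: Pm(2))[1]
      by (rule hamming_cons_diff[OF neq])
    show ?thesis using g IH(2) Pm(2) Suc.prems
      by (auto simp: take_Suc_conv_app_nth)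
  qed
qed

lemma main:
  assumes q: "q \<ge> 4" "even q"
  shows "a \<in> words q n \<Longrightarrow> b \<in> words q n \<Longrightarrow> (\<forall>i<n. a!i \<noteq> b!i) \<Longrightarrow>
     \<exists>ws. gp ws a b \<and> set ws = words q n"
proof (induction n arbitrary: a b)
  case 0
  then have "a = []" "b = []" by (auto simp: words_def)
  then show ?case by (intro exI[of _ "[[]]"]) (auto simp: gp_def words_def)
next
  case (Suc n)
  obtain a0 a' where a: "a = a0 # a'" using Suc.prems by (auto simp: words_def length_Suc_conv)
  obtain b0 b' where b: "b = b0 # b'" using Suc.prems by (auto simp: words_def length_Suc_conv)
  have a': "a' \<in> words q n" "a0 < q" using Suc.prems a by (auto simp: words_def)
  have b': "b' \<in> words q n" "b0 < q" using Suc.prems b by (auto simp: words_def)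
  have ab0: "a0 \<noteq> b0" using Suc.prems(3) a b by force
  have ab: "\<forall>i<n. a'!i \<noteq> b'!i" using Suc.prems(3) a b by force
  define c' where "c' = map (\<lambda>i. SOME x. x < q \<and> x \<noteq> a'!i \<and> x \<noteq> b'!i) [0..<n]"
  have cx: "\<exists>x. x < q \<and> x \<noteq> a'!i \<and> x \<noteq> b'!i" for i
  proof -
    have "\<exists>x\<in>{0,1,2::nat}. x \<noteq> a'!i \<and> x \<noteq> b'!i" by auto
    then show ?thesis using q by force
  qed
  have cprop: "c'!i < q \<and> c'!i \<noteq> a'!i \<and> c'!i \<noteq> b'!i" if "i < n" for i
    unfolding c'_def using someI_ex[OF cx[of i]] that by simp
  have c'w: "c' \<in> words q n"
    unfolding words_def using cprop by (auto simp: in_set_conv_nth c'_def)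
  have ac: "\<forall>i<n. a'!i \<noteq> c'!i" and bc: "\<forall>i<n. b'!i \<noteq> c'!i"
    using cprop by (metis)+
  define S :: "nat \<Rightarrow> nat list" where "S k = (if k = 0 then a' else if k = 1 then c' else if even k then b' else a')" for k
  define vs where "vs = a0 # filter (\<lambda>x. x \<noteq> a0 \<and> x \<noteq> b0) [0..<q] @ [b0]"
  have dvs: "distinct vs" using ab0 by (auto simp: vs_def)
  have svs: "set vs = {0..<q}" using a' b' by (auto simp: vs_def)
  have lvs: "length vs = q" using dvs svs distinct_card by fastforce
  have ex: "\<forall>k<length vs. \<exists>p. gp p (S k) (S (Suc k)) \<and> set p = words q n"
  proof (intro allI impI)
    fix k assume "k < length vs"
    have w: "S j \<in> words q n" for j using a' b' c'w by (simp add: S_def)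
    have ba: "\<forall>i<n. b'!i \<noteq> a'!i" using ab by metis
    have cb: "\<forall>i<n. c'!i \<noteq> b'!i" using bc by metis
    have D: "\<forall>i<n. S k ! i \<noteq> S (Suc k) ! i"
    proof -
      consider "k = 0" | "k = 1" | "k \<ge> 2" "even k" | "k \<ge> 2" "odd k" by linarith
      then show ?thesis
      proof cases
        case 1 then show ?thesis using ac by (simp add: S_def)
      next
        case 2 then show ?thesis using cb by (simp add: S_def)
      next
        case 3 then show ?thesis using ba by (simp add: S_def)
      next
        case 4 then show ?thesis using ab by (simp add: S_def)
      qed
    qed
    have "S k \<in> words q n \<and> S (Suc k) \<in> words q n \<and> (\<forall>i<n. S k ! i \<noteq> S (Suc k) ! i)"
      using w D by blast
    then show "\<exists>p. gp p (S k) (S (Suc k)) \<and> set p = words q n" using Suc.IH by blast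
  qed
  then have ex': "\<forall>k\<in>{..<length vs}. \<exists>p. gp p (S k) (S (Suc k)) \<and> set p = words q n" by simp
  from bchoice[OF ex'] obtain P where P0: "\<forall>k\<in>{..<length vs}. gp (P k) (S k) (S (Suc k)) \<and> set (P k) = words q n"
    by blast
  then have P: "\<forall>k<length vs. gp (P k) (S k) (S (Suc k)) \<and> set (P k) = words q n" by simp
  note L = layers[OF dvs P, of "length vs"]
  have "vs ! 0 = a0" "vs ! (length vs - 1) = b0" by (auto simp: vs_def nth_append)
  moreover have "S 0 = a'" "S (length vs) = b'" using lvs q by (auto simp: S_def)
  ultimately have e: "vs!0 # S 0 = a" "vs ! (length vs - 1) # S (length vs) = b" using a b by auto
  define ws where "ws = concat (map (\<lambda>k. map ((#) (vs!k)) (P k)) [0..<length vs])"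
  have "0 < length vs" using lvs q by simp
  then have Lr: "gp ws a b" "set ws = (\<lambda>(x,w). x#w) ` (set vs \<times> words q n)"
    using L unfolding ws_def e by auto
  show ?case using Lr svs words_Suc[of q n] by auto
qed

theorem lemma5:
  fixes n q :: nat
  assumes "n > 0" and "even n" and "q \<ge> 4" and "even q"
  shows "\<exists>ws :: nat list list.
           distinct ws \<and> set ws = words q n \<and>
           (\<forall>i. Suc i < length ws \<longrightarrow> hamming (ws ! i) (ws ! Suc i) = 1) \<and>
           hd ws = replicate n 0 \<and> last ws = replicate n 1"
proof -
  have "replicate n 0 \<in> words q n" "replicate n 1 \<in> words q n"
    using assms by (auto simp: words_def)
  moreover have "\<forall>i<n. replicate n (0::nat) ! i \<noteq> replicate n 1 ! i" by simp
  ultimately have "\<exists>ws. gp ws (replicate n 0) (replicate n 1) \<and> set ws = words q n"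
    using main[OF assms(3,4)] by blast
  then obtain ws where g: "gp ws (replicate n 0) (replicate n 1)" "set ws = words q n"
    by blast
  have "successively (\<lambda>u v. hamming u v = 1) ws" using g unfolding gp_def by blast
  then have "\<forall>i. Suc i < length ws \<longrightarrow> hamming (ws ! i) (ws ! Suc i) = 1"
    by (simp add: successively_conv_nth)
  then show ?thesis using g unfolding gp_def by blast
qed

end
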